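(* Let $\theta\in\,]0,1[$ be fixed and, for $n\in\mathbb{N}$, let $m=\lfloor\theta n\rfloor$. Then $$\sup_{n\in\mathbb{N},\ \lfloor\theta n\rfloor\ge1}\Lambda_n^m<\infty,\qquad\text{where }\Lambda_n^m=\sup_{|x|\le1}\int_{-1}^1|s_n^m(x,y)|\,w(y)\,dy .$$
   Context: Let $w(x)=(1-x^2)^{-1/2}$ on $[-1,1]$ and $\langle f,g\rangle_{L^2_w}=\int_{-1}^1 fgw\,dx$. The orthonormal Chebyshev polynomials are $p_0=\sqrt{1/\pi}$ and $p_r(x)=\sqrt{2/\pi}\cos(r\arccos x)$, $r\ge1$. Chebyshev nodes: $x_k^n=\cos\frac{(2k-1)\pi}{2n}$, $k=1,\ldots,n$. For $0<m<n$: $\mu_{n,r}^m=1$ if $0\le r\le n-m$, $\mu_{n,r}^m=\frac{m+n-r}{2m}$ if $n-m<r<n+m$, $0$ otherwise; for $r=0,\ldots,n-1$, $q_{n,r}^m=p_r$ if $r\le n-m$ and $q_{n,r}^m=\mu_{n,r}^m p_r-\mu_{n,2n-r}^m p_{2n-r}$ if $n-m<r<n$; $\nu_{n,r}^m=1$ if $r\le n-m$ and $\nu_{n,r}^m=\frac{m^2+(n-r)^2}{2m^2}$ if $n-m<r<n$. The orthonormal VP scaling functions are $\tilde\varphi_{n,k}^m=\sum_{r=0}^{n-1}\sqrt{\frac{\pi}{n\nu_{n,r}^m}}p_r(x_k^n)q_{n,r}^m$, $k=1,\dots,n$, and the kernel of the corresponding orthogonal projection is $s_n^m(x,y)=\sum_{k=1}^n\tilde\varphi_{n,k}^m(x)\tilde\varphi_{n,k}^m(y)$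 (equivalently $\sum_{r=0}^{n-1}q_{n,r}^m(x)q_{n,r}^m(y)/\nu_{n,r}^m$). *)

theory Defs
  imports "HOL-Analysis.Analysis"
begin

definition cheb_w :: "real \<Rightarrow> real" where
  "cheb_w x = 1 / sqrt (1 - x\<^sup>2)"

definition cheb_p :: "nat \<Rightarrow> real \<Rightarrow> real" where
  "cheb_p r x = (if r = 0 then sqrt (1 / pi) else sqrt (2 / pi) * cos (real r * arccos x))"

definition cheb_node :: "nat \<Rightarrow> nat \<Rightarrow> real" where
  "cheb_node n k = cos ((2 * real k - 1) * pi / (2 * real n))"

definition vp_mu :: "nat \<Rightarrow> nat \<Rightarrow> nat \<Rightarrow> real" where
  "vp_mu n m r =
     (if real r \<le> real n - real m then 1
      else if real n - real m < real r \<and> real r < real n + real m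
        then (real m + real n - real r) / (2 * real m)
      else 0)"

definition vp_q :: "nat \<Rightarrow> nat \<Rightarrow> nat \<Rightarrow> real \<Rightarrow> real" where
  "vp_q n m r x =
     (if real r \<le> real n - real m then cheb_p r x
      else vp_mu n m r * cheb_p r x - vp_mu n m (2 * n - r) * cheb_p (2 * n - r) x)"

definition vp_nu :: "nat \<Rightarrow> nat \<Rightarrow> nat \<Rightarrow> real" where
  "vp_nu n m r =
     (if real r \<le> real n - real m then 1
      else (real m ^ 2 + (real n - real r) ^ 2) / (2 * real m ^ 2))"

definition vp_phi :: "nat \<Rightarrow> nat \<Rightarrow> nat \<Rightarrow> real \<Rightarrow> real" where
  "vp_phi n m k x =
     (\<Sum>r<n. sqrt (pi / (real n * vp_nu n m r)) * cheb_p r (cheb_node n k) * vp_q n m r x)"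

definition vp_kernel :: "nat \<Rightarrow> nat \<Rightarrow> real \<Rightarrow> real \<Rightarrow> real" where
  "vp_kernel n m x y = (\<Sum>k=1..n. vp_phi n m k x * vp_phi n m k y)"

definition vp_Lambda :: "nat \<Rightarrow> nat \<Rightarrow> ennreal" where
  "vp_Lambda n m =
     (SUP x\<in>{-1..1}. \<integral>\<^sup>+ y. ennreal (\<bar>vp_kernel n m x y\<bar> * cheb_w y) * indicator {-1..1} y \<partial>lborel)"

end

theory Submission
  imports Defs
begin

lemma tele_cos:
  fixes a :: real
  shows "2 * sin a * (\<Sum>k=1..N. cos ((2 * real k - 1) * a)) = sin (2 * real N * a)"
proof (induction N)
  case 0 then show ?case by simp
next
  case (Suc N)
  have e: "2 * sin a * cos ((2 * real (Suc N) - 1) * a) = sin (2 * real (Suc N) * a) - sin (2 * real N * a)"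
  proof -
    have "2 * sin a * cos ((2 * real (Suc N) - 1) * a) = sin (a + (2 * real (Suc N) - 1) * a) + sin (a - (2 * real (Suc N) - 1) * a)"
      using sin_times_cos[of a "(2 * real (Suc N) - 1) * a"] by simp
    moreover have "a + (2 * real (Suc N) - 1) * a = 2 * real (Suc N) * a" by (simp add: algebra_simps)
    moreover have "a - (2 * real (Suc N) - 1) * a = - (2 * real N * a)" by (simp add: algebra_simps)
    ultimately show ?thesis by simp
  qed
  show ?case using Suc e by (simp add: distrib_left)
qed

lemma cos_node_sum:
  assumes "0 < j" "j < 2 * n"
  shows "(\<Sum>k=1..n. cos (real j * ((2 * real k - 1) * pi / (2 * real n)))) = 0"
proof -
  define a where "a = real j * pi / (2 * real n)"
  have n: "n > 0" using assms by simp
  have eq: "\<And>k. real j * ((2 * real k - 1) * pi / (2 * real n)) = (2 * real k - 1) * a"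
    by (simp add: a_def field_simps)
  have "0 < a" using assms n by (simp add: a_def)
  moreover have "a < pi" using assms n by (simp add: a_def field_simps)
  ultimately have s: "sin a > 0" by (simp add: sin_gt_zero)
  have "2 * real n * a = real j * pi" using n by (simp add: a_def field_simps)
  hence "2 * sin a * (\<Sum>k=1..n. cos ((2 * real k - 1) * a)) = 0" using tele_cos[of a n] by simp
  hence "(\<Sum>k=1..n. cos ((2 * real k - 1) * a)) = 0" using s by simp
  thus ?thesis by (simp only: eq)
qed

lemma cheb_p_cos:
  assumes "0 \<le> t" "t \<le> pi"
  shows "cheb_p r (cos t) = (if r = 0 then sqrt (1 / pi) else sqrt (2 / pi) * cos (real r * t))"
  using assms by (simp add: cheb_p_def arccos_cos)

definition node_ang :: "nat \<Rightarrow> nat \<Rightarrow> real" where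
  "node_ang n k = (2 * real k - 1) * pi / (2 * real n)"

lemma node_ang_range: "1 \<le> k \<Longrightarrow> k \<le> n \<Longrightarrow> 0 \<le> node_ang n k \<and> node_ang n k \<le> pi"
proof -
  assume a: "1 \<le> k" "k \<le> n"
  have "pi * (2 * real k - 1) \<le> pi * (2 * real n)" using a by (intro mult_left_mono) auto
  then show ?thesis using a by (auto simp: node_ang_def field_simps)
qed

lemma cheb_node_eq: "cheb_node n k = cos (node_ang n k)"
  by (simp add: cheb_node_def node_ang_def)

lemma Csum: "j < 2 * n \<Longrightarrow> (\<Sum>k=1..n. cos (real j * node_ang n k)) = (if j = 0 then real n else 0)"
  using cos_node_sum[of j n] by (auto simp: node_ang_def)

lemma cos_cos_nat: "cos (real r * x) * cos (real s * x) =
   (cos (real (if s \<le> r then r - s else s - r) * x) + cos (real (r + s) * x)) / 2"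
proof -
  have "cos (real r * x) * cos (real s * x) = (cos (real r * x - real s * x) + cos (real r * x + real s * x)) / 2"
    by (rule cos_times_cos)
  moreover have "cos (real r * x - real s * x) = cos (real (if s \<le> r then r - s else s - r) * x)"
  proof (cases "s \<le> r")
    case True then show ?thesis by (simp add: of_nat_diff algebra_simps)
  next
    case False
    have "real r * x - real s * x = - (real (s - r) * x)" using False by (simp add: of_nat_diff algebra_simps)
    then show ?thesis using False by (simp only: cos_minus) simp
  qed
  moreover have "real r * x + real s * x = real (r + s) * x" by (simp add: algebra_simps)
  ultimately show ?thesis by simp
qed

lemma cos_sum_prod:
  assumes "r < n" "s < n"
  shows "(\<Sum>k=1..n. cos (real r * node_ang n k) * cos (real s * node_ang n k)) =
     (if r = s then (if r = 0 then real n else real n / 2) else 0)"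
proof -
  have "(\<Sum>k=1..n. cos (real r * node_ang n k) * cos (real s * node_ang n k)) =
     ((\<Sum>k=1..n. cos (real (if s \<le> r then r - s else s - r) * node_ang n k)) +
      (\<Sum>k=1..n. cos (real (r + s) * node_ang n k))) / 2"
    by (simp only: cos_cos_nat sum.distrib flip: sum_divide_distrib)
  also have "\<dots> = (if r = s then (if r = 0 then real n else real n / 2) else 0)"
    using assms by (subst Csum, simp)+ auto
  finally show ?thesis .
qed

lemma orth:
  assumes "r < n" "s < n"
  shows "(\<Sum>k=1..n. cheb_p r (cheb_node n k) * cheb_p s (cheb_node n k)) = (if r = s then real n / pi else 0)"
proof -
  have pk: "\<And>r k. k \<in> {1..n} \<Longrightarrow> cheb_p r (cheb_node n k) =
     (if r = 0 then sqrt (1 / pi) else sqrt (2 / pi) * cos (real r * node_ang n k))"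
    using node_ang_range by (simp add: cheb_node_eq cheb_p_cos)
  have "(\<Sum>k=1..n. cheb_p r (cheb_node n k) * cheb_p s (cheb_node n k)) =
     (\<Sum>k=1..n. (if r = 0 then sqrt (1 / pi) else sqrt (2 / pi)) * (if s = 0 then sqrt (1 / pi) else sqrt (2 / pi))
        * (cos (real r * node_ang n k) * cos (real s * node_ang n k)))"
    by (rule sum.cong) (auto simp: pk)
  also have "\<dots> = (if r = 0 then sqrt (1 / pi) else sqrt (2 / pi)) * (if s = 0 then sqrt (1 / pi) else sqrt (2 / pi))
        * (if r = s then (if r = 0 then real n else real n / 2) else 0)"
    by (subst sum_distrib_left[symmetric]) (simp only: cos_sum_prod[OF assms])
  also have "\<dots> = (if r = s then real n / pi else 0)"
    by (auto simp: real_sqrt_mult[symmetric])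
  finally show ?thesis .
qed

lemma kernel_sum:
  assumes n: "0 < n" and nu: "\<And>r. r < n \<Longrightarrow> vp_nu n m r > 0"
  shows "vp_kernel n m x y = (\<Sum>r<n. vp_q n m r x * vp_q n m r y / vp_nu n m r)"
proof -
  define A where "A r = sqrt (pi / (real n * vp_nu n m r))" for r
  define P where "P r k = cheb_p r (cheb_node n k)" for r k
  have "vp_kernel n m x y = (\<Sum>k=1..n. (\<Sum>r<n. A r * P r k * vp_q n m r x) * (\<Sum>s<n. A s * P s k * vp_q n m s y))"
    by (simp add: vp_kernel_def vp_phi_def A_def P_def)
  also have "\<dots> = (\<Sum>k=1..n. \<Sum>r<n. \<Sum>s<n. (A r * vp_q n m r x * A s * vp_q n m s y) * (P r k * P s k))"
    unfolding sum_product by (intro sum.cong refl) (simp add: algebra_simps)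
  also have "\<dots> = (\<Sum>r<n. \<Sum>s<n. \<Sum>k=1..n. (A r * vp_q n m r x * A s * vp_q n m s y) * (P r k * P s k))"
    by (subst sum.swap, rule sum.cong, rule refl, rule sum.swap)
  also have "\<dots> = (\<Sum>r<n. \<Sum>s<n. (A r * vp_q n m r x * A s * vp_q n m s y) * (if r = s then real n / pi else 0))"
    by (intro sum.cong refl, unfold P_def sum_distrib_left[symmetric], subst orth, auto)
  also have "\<dots> = (\<Sum>r<n. (A r * vp_q n m r x * A r * vp_q n m r y) * (real n / pi))"
    by (simp add: if_distrib cong: if_cong)
  also have "\<dots> = (\<Sum>r<n. vp_q n m r x * vp_q n m r y / vp_nu n m r)"
  proof (rule sum.cong)
    fix r assume "r \<in> {..<n}"
    then have "vp_nu n m r > 0" using nu by simp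
    then have "A r * A r = pi / (real n * vp_nu n m r)"
      unfolding A_def by (simp add: n)
    then have h: "A r * A r * real n = pi / vp_nu n m r" using n by (simp add: field_simps)
    have "(A r * vp_q n m r x * A r * vp_q n m r y) * (real n / pi) = (A r * A r * real n) * (vp_q n m r x * vp_q n m r y) / pi"
      by (simp add: algebra_simps)
    also have "\<dots> = vp_q n m r x * vp_q n m r y / vp_nu n m r" unfolding h by simp
    finally show "(A r * vp_q n m r x * A r * vp_q n m r y) * (real n / pi) = vp_q n m r x * vp_q n m r y / vp_nu n m r" .
  qed simp
  finally show ?thesis .
qed

definition ee :: "nat \<Rightarrow> real \<Rightarrow> real" where
  "ee i u = (if i = 0 then 1/2 else cos (real i * u))"

definition Tc :: "(nat \<Rightarrow> real) \<Rightarrow> nat \<Rightarrow> real \<Rightarrow> real" where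
  "Tc c N u = (\<Sum>k\<le>N. c k * ee k u)"

definition ccf :: "nat \<Rightarrow> nat \<Rightarrow> nat \<Rightarrow> real" where
  "ccf n m k = (if real k \<le> real n - real m then 1 else if real n + real m \<le> real k then 0
     else 1/2 - (real k - real n) * real m / ((real m)^2 + (real k - real n)^2))"

definition ddf :: "nat \<Rightarrow> nat \<Rightarrow> real" where
  "ddf m j = (if m \<le> j then 0 else ((real m)^2 - (real j)^2) / (2 * ((real m)^2 + (real j)^2)))"

lemma cos_prod_uv: fixes a t s :: real shows "cos (a * t) * cos (a * s) = (cos (a * (t - s)) + cos (a * (t + s))) / 2"
  by (simp only: cos_times_cos right_diff_distrib distrib_left)

lemma cos_cross: fixes n j t s :: real shows "cos ((n - j) * t) * cos ((n + j) * s) + cos ((n + j) * t) * cos ((n - j) * s) =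
   cos (n * (t - s)) * cos (j * (t + s)) + cos (n * (t + s)) * cos (j * (t - s))"
proof -
  have e: "(n - j) * t = n * t - j * t" "(n + j) * s = n * s + j * s" "(n + j) * t = n * t + j * t"
     "(n - j) * s = n * s - j * s" "n * (t - s) = n * t - n * s" "j * (t + s) = j * t + j * s"
     "n * (t + s) = n * t + n * s" "j * (t - s) = j * t - j * s" by (simp_all add: algebra_simps)
  show ?thesis unfolding e by (simp add: cos_add cos_diff sin_add sin_diff algebra_simps)
qed

lemma p_prod_same:
  assumes "0 \<le> t" "t \<le> pi" "0 \<le> s" "s \<le> pi"
  shows "cheb_p a (cos t) * cheb_p a (cos s) = (ee a (t - s) + ee a (t + s)) / pi"
proof (cases "a = 0")
  case True then show ?thesis using assms by (simp add: cheb_p_cos ee_def real_sqrt_mult[symmetric])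
next
  case False
  have "cheb_p a (cos t) * cheb_p a (cos s) = (sqrt (2/pi) * sqrt (2/pi)) * (cos (real a * t) * cos (real a * s))"
    using assms False by (simp only: cheb_p_cos if_False) (simp add: algebra_simps)
  also have "\<dots> = (2 / pi) * ((cos (real a * (t - s)) + cos (real a * (t + s))) / 2)"
    by (simp only: cos_prod_uv real_sqrt_mult_self) simp
  finally show ?thesis using False by (simp add: ee_def field_simps)
qed

lemma p_cos_pos:
  assumes "0 \<le> t" "t \<le> pi" "0 < a"
  shows "cheb_p a (cos t) = sqrt (2/pi) * cos (real a * t)"
  using assms by (simp add: cheb_p_cos)

lemma termj:
  assumes m1: "1 \<le> m" and mn: "m < n" and j: "1 \<le> j" "j < m"
    and t: "0 \<le> t" "t \<le> pi" and s: "0 \<le> s" "s \<le> pi"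
  shows "pi * (vp_q n m (n - j) (cos t) * vp_q n m (n - j) (cos s) / vp_nu n m (n - j)) =
     ccf n m (n - j) * (cos (real (n - j) * (t - s)) + cos (real (n - j) * (t + s)))
       + ccf n m (n + j) * (cos (real (n + j) * (t - s)) + cos (real (n + j) * (t + s)))
       - 2 * ddf m j * (cos (real n * (t - s)) * cos (real j * (t + s)) + cos (real n * (t + s)) * cos (real j * (t - s)))"
proof -
  define a where "a = n - j"
  define b where "b = n + j"
  have ra: "real a = real n - real j" using j mn by (simp add: a_def of_nat_diff)
  have rb: "real b = real n + real j" by (simp add: b_def)
  have a0: "0 < a" "0 < b" using j mn by (auto simp: a_def b_def)
  have b2: "2 * n - a = b" using j mn by (simp add: a_def b_def)
  define mu1 where "mu1 = (real m + real j) / (2 * real m)"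
  define mu2 where "mu2 = (real m - real j) / (2 * real m)"
  define D where "D = (real m)^2 + (real j)^2"
  define nu where "nu = D / (2 * (real m)^2)"
  have mpos: "real m > 0" using m1 by simp
  have Dpos: "D > 0" unfolding D_def using mpos by (simp add: add_pos_nonneg)
  have nupos: "nu > 0" unfolding nu_def using mpos Dpos by simp
  have ja: "\<not> real a \<le> real n - real m" using j ra by simp
  have mua: "vp_mu n m a = mu1" using ja j ra mn unfolding vp_mu_def mu1_def by simp
  have mub: "vp_mu n m b = mu2" using j rb mn unfolding vp_mu_def mu2_def by auto
  have nua: "vp_nu n m a = nu" using ja ra unfolding vp_nu_def nu_def D_def by simp
  have qa: "\<And>z. vp_q n m a z = mu1 * cheb_p a z - mu2 * cheb_p b z"
    using ja unfolding vp_q_def by (simp add: mua mub b2)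
  define sq where "sq = sqrt (2 / pi)"
  have sq2: "sq * sq = 2 / pi" unfolding sq_def by simp
  define cat where "cat = cos (real a * t)"
  define cas where "cas = cos (real a * s)"
  define cbt where "cbt = cos (real b * t)"
  define cbs where "cbs = cos (real b * s)"
  have pa: "cheb_p a (cos t) = sq * cat" "cheb_p a (cos s) = sq * cas"
     "cheb_p b (cos t) = sq * cbt" "cheb_p b (cos s) = sq * cbs"
    using t s a0 by (simp_all add: p_cos_pos sq_def cat_def cas_def cbt_def cbs_def)
  have "pi * (vp_q n m a (cos t) * vp_q n m a (cos s) / vp_nu n m a) =
     pi * ((mu1 * (sq * cat) - mu2 * (sq * cbt)) * (mu1 * (sq * cas) - mu2 * (sq * cbs)) / nu)"
    by (simp add: qa pa nua)
  also have "\<dots> = pi * (sq * sq) / nu * (mu1^2 * (cat * cas) + mu2^2 * (cbt * cbs) - mu1 * mu2 * (cat * cbs + cbt * cas))"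
    using nupos by (simp add: field_simps power2_eq_square)
  also have "\<dots> = 2 / nu * (mu1^2 * (cat * cas) + mu2^2 * (cbt * cbs) - mu1 * mu2 * (cat * cbs + cbt * cas))"
    by (simp add: sq2)
  also have "cat * cas = (cos (real a * (t - s)) + cos (real a * (t + s))) / 2"
    unfolding cat_def cas_def by (rule cos_prod_uv)
  also have "cbt * cbs = (cos (real b * (t - s)) + cos (real b * (t + s))) / 2"
    unfolding cbt_def cbs_def by (rule cos_prod_uv)
  also have "cat * cbs + cbt * cas = cos (real n * (t - s)) * cos (real j * (t + s)) + cos (real n * (t + s)) * cos (real j * (t - s))"
    unfolding cat_def cas_def cbt_def cbs_def ra rb by (rule cos_cross)
  finally have main: "pi * (vp_q n m a (cos t) * vp_q n m a (cos s) / vp_nu n m a) =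
    2 / nu * (mu1\<^sup>2 * ((cos (real a * (t - s)) + cos (real a * (t + s))) / 2) +
        mu2\<^sup>2 * ((cos (real b * (t - s)) + cos (real b * (t + s))) / 2) -
        mu1 * mu2 * (cos (real n * (t - s)) * cos (real j * (t + s)) + cos (real n * (t + s)) * cos (real j * (t - s))))" .
  have cA: "mu1^2 / nu = ccf n m a"
  proof -
    have "ccf n m a = 1/2 + real j * real m / D"
      using ja ra j unfolding ccf_def D_def by (simp add: power2_eq_square)
    also have "\<dots> = (real m + real j)^2 / (2 * D)" using Dpos
      by (simp add: field_simps) (simp add: D_def power2_eq_square algebra_simps)
    also have "\<dots> = mu1^2 / nu" unfolding mu1_def nu_def using mpos Dpos
      by (simp add: field_simps power2_eq_square)
    finally show ?thesis by simp
  qed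
  have cB: "mu2^2 / nu = ccf n m b"
  proof -
    have nb: "\<not> real b \<le> real n - real m" "\<not> real n + real m \<le> real b" using rb j mpos by auto
    have "ccf n m b = 1/2 - real j * real m / D"
      using nb rb unfolding ccf_def D_def by (simp add: power2_eq_square)
    also have "\<dots> = (real m - real j)^2 / (2 * D)" using Dpos
      by (simp add: field_simps) (simp add: D_def power2_eq_square algebra_simps)
    also have "\<dots> = mu2^2 / nu" unfolding mu2_def nu_def using mpos Dpos
      by (simp add: field_simps power2_eq_square)
    finally show ?thesis by simp
  qed
  have cD: "mu1 * mu2 / nu = ddf m j"
  proof -
    have "ddf m j = ((real m)^2 - (real j)^2) / (2 * D)" using j unfolding ddf_def D_def by simp
    also have "\<dots> = mu1 * mu2 / nu" unfolding mu1_def mu2_def nu_def using mpos Dpos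
      by (simp add: field_simps power2_eq_square)
    finally show ?thesis by simp
  qed
  have "pi * (vp_q n m a (cos t) * vp_q n m a (cos s) / vp_nu n m a) =
    (mu1^2 / nu) * (cos (real a * (t - s)) + cos (real a * (t + s)))
    + (mu2^2 / nu) * (cos (real b * (t - s)) + cos (real b * (t + s)))
    - 2 * (mu1 * mu2 / nu) * (cos (real n * (t - s)) * cos (real j * (t + s)) + cos (real n * (t + s)) * cos (real j * (t - s)))"
    unfolding main using nupos by (simp add: field_simps)
  then show ?thesis unfolding cA cB cD a_def b_def .
qed

lemma split_lessThan:
  fixes n m :: nat
  assumes "m < n" "0 < m"
  shows "(\<Sum>r<n. f r) = (\<Sum>r\<le>n - m. f r) + (\<Sum>j\<in>{1..<m}. f (n - j))"
proof -
  have "{..<n} = {..n-m} \<union> {n-m<..<n}"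
  proof -
    have nm: "n - m < n" using assms by simp
    show ?thesis
    proof (rule set_eqI)
      fix x show "x \<in> {..<n} \<longleftrightarrow> x \<in> {..n-m} \<union> {n-m<..<n}"
        using nm by (cases "x \<le> n - m") auto
    qed
  qed
  moreover have "{..n-m} \<inter> {n-m<..<n} = {}" by auto
  ultimately have "(\<Sum>r<n. f r) = (\<Sum>r\<le>n - m. f r) + (\<Sum>r\<in>{n-m<..<n}. f r)"
    by (simp add: sum.union_disjoint)
  moreover have "(\<Sum>r\<in>{n-m<..<n}. f r) = (\<Sum>j\<in>{1..<m}. f (n - j))"
    by (rule sum.reindex_bij_witness[where i="\<lambda>j. n - j" and j="\<lambda>r. n - r"]) (use assms in auto)
  ultimately show ?thesis by simp
qed

lemma stepA:
  assumes m1: "1 \<le> m" and mn: "m < n"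
    and t: "0 \<le> t" "t \<le> pi" and s: "0 \<le> s" "s \<le> pi"
  shows "pi * (\<Sum>r<n. vp_q n m r (cos t) * vp_q n m r (cos s) / vp_nu n m r) =
    (\<Sum>r\<le>n - m. ee r (t - s) + ee r (t + s)) +
    (\<Sum>j\<in>{1..<m}. ccf n m (n - j) * (cos (real (n - j) * (t - s)) + cos (real (n - j) * (t + s)))
       + ccf n m (n + j) * (cos (real (n + j) * (t - s)) + cos (real (n + j) * (t + s)))
       - 2 * ddf m j * (cos (real n * (t - s)) * cos (real j * (t + s)) + cos (real n * (t + s)) * cos (real j * (t - s))))"
proof -
  have "pi * (\<Sum>r<n. vp_q n m r (cos t) * vp_q n m r (cos s) / vp_nu n m r) =
     (\<Sum>r<n. pi * (vp_q n m r (cos t) * vp_q n m r (cos s) / vp_nu n m r))"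
    by (simp add: sum_distrib_left)
  also have "\<dots> = (\<Sum>r\<le>n - m. pi * (vp_q n m r (cos t) * vp_q n m r (cos s) / vp_nu n m r)) +
     (\<Sum>j\<in>{1..<m}. pi * (vp_q n m (n - j) (cos t) * vp_q n m (n - j) (cos s) / vp_nu n m (n - j)))"
    by (rule split_lessThan[OF mn]) (use m1 in simp)
  finally have e1: "pi * (\<Sum>r<n. vp_q n m r (cos t) * vp_q n m r (cos s) / vp_nu n m r) = (\<Sum>r\<le>n - m. pi * (vp_q n m r (cos t) * vp_q n m r (cos s) / vp_nu n m r)) +
     (\<Sum>j\<in>{1..<m}. pi * (vp_q n m (n - j) (cos t) * vp_q n m (n - j) (cos s) / vp_nu n m (n - j)))" .
  have eL: "(\<Sum>r\<le>n - m. pi * (vp_q n m r (cos t) * vp_q n m r (cos s) / vp_nu n m r)) =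
      (\<Sum>r\<le>n - m. ee r (t - s) + ee r (t + s))"
  proof (rule sum.cong)
    fix r assume "r \<in> {..n-m}"
    then have "real r \<le> real n - real m" using mn by (simp add: of_nat_diff)
    then have "vp_q n m r = cheb_p r" "vp_nu n m r = 1"
      unfolding vp_q_def vp_nu_def by (auto simp: fun_eq_iff)
    then show "pi * (vp_q n m r (cos t) * vp_q n m r (cos s) / vp_nu n m r) = ee r (t - s) + ee r (t + s)"
      using p_prod_same[OF t s, of r] by simp
  qed simp
  have eH: "(\<Sum>j\<in>{1..<m}. pi * (vp_q n m (n - j) (cos t) * vp_q n m (n - j) (cos s) / vp_nu n m (n - j))) =
    (\<Sum>j\<in>{1..<m}. ccf n m (n - j) * (cos (real (n - j) * (t - s)) + cos (real (n - j) * (t + s)))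
       + ccf n m (n + j) * (cos (real (n + j) * (t - s)) + cos (real (n + j) * (t + s)))
       - 2 * ddf m j * (cos (real n * (t - s)) * cos (real j * (t + s)) + cos (real n * (t + s)) * cos (real j * (t - s))))"
  proof (rule sum.cong[OF refl])
    fix j assume "j \<in> {1..<m}"
    then have jj: "1 \<le> j" "j < m" by auto
    show "pi * (vp_q n m (n - j) (cos t) * vp_q n m (n - j) (cos s) / vp_nu n m (n - j)) =
      ccf n m (n - j) * (cos (real (n - j) * (t - s)) + cos (real (n - j) * (t + s)))
       + ccf n m (n + j) * (cos (real (n + j) * (t - s)) + cos (real (n + j) * (t + s)))
       - 2 * ddf m j * (cos (real n * (t - s)) * cos (real j * (t + s)) + cos (real n * (t + s)) * cos (real j * (t - s)))"
      by (rule termj[OF m1 mn jj t s])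
  qed
  show ?thesis by (simp only: e1 eL eH)
qed

lemma stepB:
  assumes m1: "1 \<le> m" and mn: "m < n"
  shows "Tc (ccf n m) (n + m) u = (\<Sum>r\<le>n - m. ee r u) +
     (\<Sum>j\<in>{1..<m}. ccf n m (n - j) * cos (real (n - j) * u) + ccf n m (n + j) * cos (real (n + j) * u))
     + cos (real n * u) / 2"
proof -
  let ?f = "\<lambda>k. ccf n m k * ee k u"
  have U: "{..n+m} = {..n-m} \<union> {n-m<..<n} \<union> {n} \<union> {n<..<n+m} \<union> {n+m}" using mn by auto
  have E0: "(\<Sum>k\<le>n+m. ?f k) = (\<Sum>k\<le>n-m. ?f k) + (\<Sum>k\<in>{n-m<..<n}. ?f k) + ?f n + (\<Sum>k\<in>{n<..<n+m}. ?f k) + ?f (n+m)"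
  proof -
    have d1: "{..n-m} \<inter> {n-m<..<n} = {}" by auto
    have nm: "n - m < n" using m1 mn by simp
    have d2: "({..n-m} \<union> {n-m<..<n}) \<inter> {n} = {}" using nm by auto
    have d3: "({..n-m} \<union> {n-m<..<n} \<union> {n}) \<inter> {n<..<n+m} = {}" by auto
    have d4: "({..n-m} \<union> {n-m<..<n} \<union> {n} \<union> {n<..<n+m}) \<inter> {n+m} = {}" using m1 nm by auto
    show ?thesis
      by (simp only: U sum.union_disjoint[OF _ _ d4] sum.union_disjoint[OF _ _ d3] sum.union_disjoint[OF _ _ d2]
        sum.union_disjoint[OF _ _ d1] finite_atMost finite_greaterThanLessThan finite_insert finite.emptyI finite_Un
        simp_thms) simp
  qed
  have E1: "(\<Sum>k\<le>n-m. ?f k) = (\<Sum>r\<le>n - m. ee r u)"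
    by (rule sum.cong) (use mn in \<open>auto simp: ccf_def of_nat_diff\<close>)
  have E2: "(\<Sum>k\<in>{n-m<..<n}. ?f k) = (\<Sum>j\<in>{1..<m}. ?f (n - j))"
    by (rule sum.reindex_bij_witness[where i="\<lambda>j. n - j" and j="\<lambda>r. n - r"]) (use mn in auto)
  have E3: "(\<Sum>k\<in>{n<..<n+m}. ?f k) = (\<Sum>j\<in>{1..<m}. ?f (n + j))"
    by (rule sum.reindex_bij_witness[where i="\<lambda>j. n + j" and j="\<lambda>r. r - n"]) auto
  have E4: "?f n = cos (real n * u) / 2"
  proof -
    have "m \<noteq> 0" "n \<noteq> 0" using m1 mn by auto
    then show ?thesis by (simp add: ccf_def ee_def)
  qed
  have E5: "?f (n+m) = 0" using m1 by (simp add: ccf_def)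
  have a: "(\<Sum>j\<in>{1..<m}. ?f (n - j)) = (\<Sum>j\<in>{1..<m}. ccf n m (n - j) * cos (real (n - j) * u))"
    by (rule sum.cong) (use mn in \<open>auto simp: ee_def\<close>)
  have b: "(\<Sum>j\<in>{1..<m}. ?f (n + j)) = (\<Sum>j\<in>{1..<m}. ccf n m (n + j) * cos (real (n + j) * u))"
    by (rule sum.cong) (use mn in \<open>auto simp: ee_def\<close>)
  show ?thesis unfolding Tc_def E0 E1 E2 E3 E4 E5 a b sum.distrib by simp
qed

lemma stepC:
  assumes m1: "1 \<le> m"
  shows "Tc (ddf m) m u = 1/4 + (\<Sum>j\<in>{1..<m}. ddf m j * cos (real j * u))"
proof -
  have U: "{..m} = {0} \<union> {1..<m} \<union> {m}" using m1 by auto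
  have "Tc (ddf m) m u = ddf m 0 * ee 0 u + (\<Sum>j\<in>{1..<m}. ddf m j * ee j u) + ddf m m * ee m u"
  proof -
    have d1: "{0::nat} \<inter> {1..<m} = {}" by auto
    have d2: "({0::nat} \<union> {1..<m}) \<inter> {m} = {}" using m1 by auto
    show ?thesis unfolding Tc_def
      by (simp only: U sum.union_disjoint[OF _ _ d2] sum.union_disjoint[OF _ _ d1] finite_atLeastLessThan finite_insert finite.emptyI finite_Un
        simp_thms) simp
  qed
  also have "(\<Sum>j\<in>{1..<m}. ddf m j * ee j u) = (\<Sum>j\<in>{1..<m}. ddf m j * cos (real j * u))"
    by (rule sum.cong) (auto simp: ee_def)
  moreover have "ddf m 0 * ee 0 u = 1/4" "ddf m m * ee m u = 0" using m1 by (simp_all add: ddf_def ee_def)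
  ultimately show ?thesis by simp
qed

lemma vp_nu_pos: "1 \<le> m \<Longrightarrow> vp_nu n m r > 0"
  unfolding vp_nu_def by (auto intro!: divide_pos_pos add_pos_nonneg)

lemma kernel_identity:
  assumes m1: "1 \<le> m" and mn: "m < n"
    and t: "0 \<le> t" "t \<le> pi" and s: "0 \<le> s" "s \<le> pi"
  shows "pi * vp_kernel n m (cos t) (cos s) =
     Tc (ccf n m) (n + m) (t - s) + Tc (ccf n m) (n + m) (t + s)
     - 2 * cos (real n * (t - s)) * Tc (ddf m) m (t + s)
     - 2 * cos (real n * (t + s)) * Tc (ddf m) m (t - s)"
proof -
  define u where "u = t - s"
  define v where "v = t + s"
  define A where "A w = (\<Sum>j\<in>{1..<m}. ccf n m (n - j) * cos (real (n - j) * w) + ccf n m (n + j) * cos (real (n + j) * w))" for w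
  define G where "G w = (\<Sum>j\<in>{1..<m}. ddf m j * cos (real j * w))" for w
  define L where "L w = (\<Sum>r\<le>n - m. ee r w)" for w
  have n0: "0 < n" using mn by simp
  have K: "vp_kernel n m (cos t) (cos s) = (\<Sum>r<n. vp_q n m r (cos t) * vp_q n m r (cos s) / vp_nu n m r)"
    by (rule kernel_sum[OF n0 vp_nu_pos[OF m1]])
  have sA: "pi * vp_kernel n m (cos t) (cos s) =
    (\<Sum>r\<le>n - m. ee r u + ee r v) +
    (\<Sum>j\<in>{1..<m}. ccf n m (n - j) * (cos (real (n - j) * u) + cos (real (n - j) * v))
       + ccf n m (n + j) * (cos (real (n + j) * u) + cos (real (n + j) * v))
       - 2 * ddf m j * (cos (real n * u) * cos (real j * v) + cos (real n * v) * cos (real j * u)))"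
    unfolding K u_def v_def by (rule stepA[OF m1 mn t s])
  have W: "(\<Sum>j\<in>{1..<m}. ccf n m (n - j) * (cos (real (n - j) * u) + cos (real (n - j) * v))
       + ccf n m (n + j) * (cos (real (n + j) * u) + cos (real (n + j) * v))
       - 2 * ddf m j * (cos (real n * u) * cos (real j * v) + cos (real n * v) * cos (real j * u)))
     = A u + A v - 2 * cos (real n * u) * G v - 2 * cos (real n * v) * G u"
  proof -
    have "(\<Sum>j\<in>{1..<m}. ccf n m (n - j) * (cos (real (n - j) * u) + cos (real (n - j) * v))
       + ccf n m (n + j) * (cos (real (n + j) * u) + cos (real (n + j) * v))
       - 2 * ddf m j * (cos (real n * u) * cos (real j * v) + cos (real n * v) * cos (real j * u)))
      = (\<Sum>j\<in>{1..<m}. (ccf n m (n - j) * cos (real (n - j) * u) + ccf n m (n + j) * cos (real (n + j) * u))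
          + (ccf n m (n - j) * cos (real (n - j) * v) + ccf n m (n + j) * cos (real (n + j) * v))
          - 2 * cos (real n * u) * (ddf m j * cos (real j * v)) - 2 * cos (real n * v) * (ddf m j * cos (real j * u)))"
      by (rule sum.cong) (simp_all add: algebra_simps)
    also have "\<dots> = A u + A v - 2 * cos (real n * u) * G v - 2 * cos (real n * v) * G u"
      unfolding A_def G_def by (simp only: sum.distrib sum_subtractf sum_distrib_left)
    finally show ?thesis .
  qed
  have Lsplit: "(\<Sum>r\<le>n - m. ee r u + ee r v) = L u + L v" unfolding L_def by (simp only: sum.distrib)
  have B: "\<And>w. Tc (ccf n m) (n + m) w = L w + A w + cos (real n * w) / 2"
    unfolding L_def A_def by (rule stepB[OF m1 mn])
  have C: "\<And>w. Tc (ddf m) m w = 1/4 + G w"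
    unfolding G_def by (rule stepC[OF m1])
  show ?thesis
    unfolding u_def[symmetric] v_def[symmetric] sA W Lsplit B C by (simp add: algebra_simps)
qed

definition Dk :: "nat \<Rightarrow> real \<Rightarrow> real" where "Dk j u = (\<Sum>i\<le>j. ee i u)"
definition Sk :: "nat \<Rightarrow> real \<Rightarrow> real" where "Sk k u = (\<Sum>j\<le>k. Dk j u)"

lemma D_mul: "Dk j u * (1 - cos u) = (cos (real j * u) - cos (real (Suc j) * u)) / 2"
proof (induction j)
  case 0 then show ?case by (simp add: Dk_def ee_def)
next
  case (Suc j)
  have "Dk (Suc j) u = Dk j u + cos (real (Suc j) * u)" by (simp add: Dk_def ee_def)
  moreover have "cos (real (Suc j) * u) * cos u = (cos (real j * u) + cos (real (Suc (Suc j)) * u)) / 2"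
  proof -
    have "cos (real (Suc j) * u) * cos u = (cos (real (Suc j) * u - u) + cos (real (Suc j) * u + u)) / 2"
      by (rule cos_times_cos)
    moreover have "real (Suc j) * u - u = real j * u" "real (Suc j) * u + u = real (Suc (Suc j)) * u"
      by (simp_all add: algebra_simps)
    ultimately show ?thesis by simp
  qed
  ultimately show ?case using Suc.IH by (simp add: algebra_simps)
qed

lemma S_mul: "Sk k u * (1 - cos u) = (1 - cos (real (Suc k) * u)) / 2"
proof (induction k)
  case 0 then show ?case using D_mul[of 0 u] by (simp add: Sk_def)
next
  case (Suc k)
  have "Sk (Suc k) u = Sk k u + Dk (Suc k) u" by (simp add: Sk_def)
  then show ?case using Suc.IH D_mul[of "Suc k" u] by (simp add: algebra_simps)
qed

lemma S_nonneg: "Sk k u \<ge> 0"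
proof (cases "cos u = 1")
  case True
  then obtain z :: int where z: "u = of_int z * 2 * pi" using cos_one_2pi_int by auto
  have "\<And>i. ee i u \<ge> 0"
  proof -
    fix i
    have "real i * u = (2 * pi) * of_int (int i * z)" unfolding z by (simp add: algebra_simps)
    then have "cos (real i * u) = 1" by (simp only: cos_int_2pin)
    then show "ee i u \<ge> 0" by (simp add: ee_def)
  qed
  then show ?thesis unfolding Sk_def Dk_def by (intro sum_nonneg) auto
next
  case False
  then have c: "1 - cos u > 0" using cos_le_one[of u] by linarith
  have "Sk k u * (1 - cos u) \<ge> 0" unfolding S_mul using cos_le_one[of "real (Suc k) * u"] by simp
  then show ?thesis using c by (simp add: zero_le_mult_iff)
qed

lemma ee_even: "ee i (- u) = ee i u" by (simp add: ee_def)

lemma Sk_even: "Sk k (- u) = Sk k u" by (simp add: Sk_def Dk_def ee_even)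

lemma cont_ee: "continuous_on S (\<lambda>s. ee i (s + b))"
  by (cases "i = 0") (auto simp: ee_def intro!: continuous_intros)

lemma cont_Sk: "continuous_on S (\<lambda>s. Sk k (s + b))"
  unfolding Sk_def Dk_def by (intro continuous_on_sum cont_ee)

lemma ee_integral: "((\<lambda>s. ee i (s + b)) has_integral (if i = 0 then pi else 0)) {0..2*pi}"
proof (cases "i = 0")
  case True
  then show ?thesis using has_integral_const_real[of "1/2::real" 0 "2*pi"] by (simp add: ee_def)
next
  case False
  define f where "f s = sin (real i * (s + b)) / real i" for s
  have d: "\<And>x. (f has_vector_derivative cos (real i * (x + b))) (at x within {0..2*pi})"
    unfolding f_def has_real_derivative_iff_has_vector_derivative[symmetric] using False
    by (auto intro!: derivative_eq_intros)
  have "((\<lambda>s. cos (real i * (s + b))) has_integral (f (2*pi) - f 0)) {0..2*pi}"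
    by (rule fundamental_theorem_of_calculus) (use d in auto)
  moreover have "f (2*pi) = f 0"
  proof -
    have "real i * (2 * pi + b) = real i * b + 2 * real i * pi" by (simp add: algebra_simps)
    then show ?thesis unfolding f_def by (simp add: sin_add)
  qed
  ultimately show ?thesis using False by (simp add: ee_def)
qed

lemma Sk_integral_2pi: "((\<lambda>s. Sk k (s + b)) has_integral (real (Suc k) * pi)) {0..2*pi}"
proof -
  have "((\<lambda>s. Sk k (s + b)) has_integral (\<Sum>j\<le>k. \<Sum>i\<le>j. (if i = 0 then pi else 0))) {0..2*pi}"
    unfolding Sk_def Dk_def by (intro has_integral_sum ee_integral finite_atMost)
  moreover have "(\<Sum>j\<le>k. \<Sum>i\<le>j. (if i = 0 then pi else 0)) = real (Suc k) * pi"
    by (simp add: sum.delta)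
  ultimately show ?thesis by simp
qed

lemma Sk_integral_pi:
  "(\<lambda>s. Sk k (s + b)) integrable_on {0..pi} \<and> integral {0..pi} (\<lambda>s. Sk k (s + b)) \<le> real (Suc k) * pi"
proof
  show i1: "(\<lambda>s. Sk k (s + b)) integrable_on {0..pi}"
    by (rule integrable_continuous_interval) (rule cont_Sk)
  have "integral {0..pi} (\<lambda>s. Sk k (s + b)) \<le> integral {0..2*pi} (\<lambda>s. Sk k (s + b))"
    by (rule integral_subset_le) (use i1 Sk_integral_2pi S_nonneg in auto)
  also have "\<dots> = real (Suc k) * pi" using Sk_integral_2pi by (rule integral_unique)
  finally show "integral {0..pi} (\<lambda>s. Sk k (s + b)) \<le> real (Suc k) * pi" .
qed

definition d2 :: "(nat \<Rightarrow> real) \<Rightarrow> nat \<Rightarrow> real" where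
  "d2 c k = c k - 2 * c (Suc k) + c (Suc (Suc k))"

lemma abel_gen:
  "Tc c N u = (\<Sum>k\<le>N. d2 c k * Sk k u) + (c (Suc N) - c (Suc (Suc N))) * Sk N u + c (Suc N) * Dk N u"
proof (induction N)
  case 0 then show ?case by (simp add: Tc_def d2_def Sk_def Dk_def algebra_simps)
next
  case (Suc N)
  have S: "Sk (Suc N) u = Sk N u + Dk (Suc N) u" by (simp add: Sk_def)
  have D: "Dk (Suc N) u = Dk N u + ee (Suc N) u" by (simp add: Dk_def)
  have "Tc c (Suc N) u = Tc c N u + c (Suc N) * ee (Suc N) u" by (simp add: Tc_def)
  then show ?case unfolding Suc.IH using S D by (simp add: d2_def algebra_simps)
qed

lemma abel_bound:
  assumes "c (Suc N) = 0" "c (Suc (Suc N)) = 0"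
  shows "\<bar>Tc c N u\<bar> \<le> (\<Sum>k\<le>N. \<bar>d2 c k\<bar> * Sk k u)"
proof -
  have "Tc c N u = (\<Sum>k\<le>N. d2 c k * Sk k u)" using abel_gen[of c N u] assms by simp
  also have "\<bar>\<dots>\<bar> \<le> (\<Sum>k\<le>N. \<bar>d2 c k * Sk k u\<bar>)" by (rule sum_abs)
  also have "\<dots> = (\<Sum>k\<le>N. \<bar>d2 c k\<bar> * Sk k u)" using S_nonneg by (simp add: abs_mult)
  finally show ?thesis .
qed

lemma second_diff:
  fixes F F1 F2 :: "real \<Rightarrow> real"
  assumes d1: "\<And>y. (F has_real_derivative F1 y) (at y)"
    and d2: "\<And>y. (F1 has_real_derivative F2 y) (at y)"
    and B: "\<And>y. \<bar>F2 y\<bar> \<le> B" and h: "0 < h"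
  shows "\<bar>F x - 2 * F (x + h) + F (x + 2 * h)\<bar> \<le> B * h^2"
proof -
  define phi where "phi y = F (y + h) - F y" for y
  have dphi: "\<And>y. (phi has_real_derivative (F1 (y + h) - F1 y)) (at y)"
  proof -
    fix y
    have a: "((\<lambda>z. F (z + h)) has_real_derivative F1 (y + h)) (at y)"
      using d1[of "y + h"] by (simp add: DERIV_shift)
    show "(phi has_real_derivative (F1 (y + h) - F1 y)) (at y)"
      unfolding phi_def by (rule DERIV_diff[OF a d1])
  qed
  obtain z where z: "x < z" "z < x + h" "phi (x + h) - phi x = (x + h - x) * (F1 (z + h) - F1 z)"
    using MVT2[of x "x + h" phi "\<lambda>y. F1 (y + h) - F1 y"] h dphi by auto
  obtain w where w: "z < w" "w < z + h" "F1 (z + h) - F1 z = (z + h - z) * F2 w"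
    using MVT2[of z "z + h" F1 F2] h d2 by auto
  have "F x - 2 * F (x + h) + F (x + 2 * h) = phi (x + h) - phi x"
  proof -
    have eq: "x + h + h = x + 2 * h" by simp
    show ?thesis unfolding phi_def eq by simp
  qed
  also have "\<dots> = h * (h * F2 w)" using z w by simp
  finally have "\<bar>F x - 2 * F (x + h) + F (x + 2 * h)\<bar> = h * h * \<bar>F2 w\<bar>"
    using h by (simp add: abs_mult)
  also have "\<dots> \<le> h * h * B" using B[of w] h by (intro mult_left_mono) auto
  finally show ?thesis by (simp add: power2_eq_square algebra_simps)
qed

lemma onep_pos: "(1::real) + y^2 > 0" by (simp add: add_pos_nonneg)

lemma g_deriv1: "((\<lambda>y::real. y / (1 + y^2)) has_real_derivative ((1 - y^2) / (1 + y^2)^2)) (at y)"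
proof -
  have "((\<lambda>y::real. y / (1 + y^2)) has_real_derivative ((1 * (1 + y^2) - y * (2 * y)) / (1 + y^2)^2)) (at y)"
    using onep_pos[of y] by (auto intro!: derivative_eq_intros simp: power2_eq_square)
  then show ?thesis by (simp add: power2_eq_square algebra_simps)
qed

lemma g_deriv2: "((\<lambda>y::real. (1 - y^2) / (1 + y^2)^2) has_real_derivative ((2 * y^3 - 6 * y) / (1 + y^2)^3)) (at y)"
proof -
  have p: "(1 + y^2)^2 \<noteq> 0" "1 + y^2 \<noteq> 0" using onep_pos[of y] by auto
  have "((\<lambda>y::real. (1 - y^2) / (1 + y^2)^2) has_real_derivative
     (((- (2 * y)) * (1 + y^2)^2 - (1 - y^2) * (2 * (1 + y^2) * (2 * y))) / ((1 + y^2)^2)^2)) (at y)"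
    using p by (auto intro!: derivative_eq_intros simp: power2_eq_square)
  also have "(((- (2 * y)) * (1 + y^2)^2 - (1 - y^2) * (2 * (1 + y^2) * (2 * y))) / ((1 + y^2)^2)^2) =
      (2 * y^3 - 6 * y) / (1 + y^2)^3"
  proof -
    define P where "P = 1 + y^2"
    have P0: "P \<noteq> 0" using p P_def by simp
    have num: "(- (2 * y)) * P^2 - (1 - y^2) * (2 * P * (2 * y)) = P * (2 * y^3 - 6 * y)"
      unfolding P_def by (simp add: algebra_simps power2_eq_square power3_eq_cube)
    have "P * (2 * y^3 - 6 * y) / (P^2)^2 = (2 * y^3 - 6 * y) / P^3"
      using P0 by (simp add: field_simps power2_eq_square power3_eq_cube)
    then show ?thesis using num unfolding P_def by simp
  qed
  finally show ?thesis .
qed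

lemma r_deriv1: "((\<lambda>y::real. 1 / (1 + y^2)) has_real_derivative (- 2 * y / (1 + y^2)^2)) (at y)"
proof -
  have "((\<lambda>y::real. 1 / (1 + y^2)) has_real_derivative ((0 * (1 + y^2) - 1 * (2 * y)) / (1 + y^2)^2)) (at y)"
    using onep_pos[of y] by (auto intro!: derivative_eq_intros simp: power2_eq_square)
  then show ?thesis by simp
qed

lemma r_deriv2: "((\<lambda>y::real. - 2 * y / (1 + y^2)^2) has_real_derivative ((6 * y^2 - 2) / (1 + y^2)^3)) (at y)"
proof -
  have p: "(1 + y^2)^2 \<noteq> 0" "1 + y^2 \<noteq> 0" using onep_pos[of y] by auto
  have "((\<lambda>y::real. - 2 * y / (1 + y^2)^2) has_real_derivative
     (((- 2) * (1 + y^2)^2 - (- 2 * y) * (2 * (1 + y^2) * (2 * y))) / ((1 + y^2)^2)^2)) (at y)"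
    using p by (auto intro!: derivative_eq_intros simp: power2_eq_square) (simp add: minus_divide_left field_simps algebra_simps)
  also have "(((- 2) * (1 + y^2)^2 - (- 2 * y) * (2 * (1 + y^2) * (2 * y))) / ((1 + y^2)^2)^2) =
      (6 * y^2 - 2) / (1 + y^2)^3"
  proof -
    define P where "P = 1 + y^2"
    have P0: "P \<noteq> 0" using p P_def by simp
    have num: "(- 2) * P^2 - (- 2 * y) * (2 * P * (2 * y)) = P * (6 * y^2 - 2)"
      unfolding P_def by (simp add: algebra_simps power2_eq_square power3_eq_cube)
    have "P * (6 * y^2 - 2) / (P^2)^2 = (6 * y^2 - 2) / P^3"
      using P0 by (simp add: field_simps power2_eq_square power3_eq_cube)
    then show ?thesis using num unfolding P_def by simp
  qed
  finally show ?thesis .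
qed

lemma absy_le: "\<bar>y::real\<bar> \<le> 1 + y^2"
proof -
  have "0 \<le> (\<bar>y\<bar> - 1/2)^2" by simp
  then have "\<bar>y\<bar> \<le> 1/4 + \<bar>y\<bar>^2" by (simp add: power2_eq_square algebra_simps)
  then show ?thesis by simp
qed

lemma P3_ge: "(1::real) + y^2 \<le> (1 + y^2)^3"
proof -
  have "1 \<le> (1::real) + y^2" by simp
  then show ?thesis by (metis power_increasing[of 1 3 "1 + y^2"] power_one_right one_le_numeral)
qed

lemma g2_bound: "\<bar>(2 * y^3 - 6 * y) / (1 + y^2)^3\<bar> \<le> (8::real)"
proof -
  have P: "(1 + y^2)^3 > 0" using onep_pos[of y] by simp
  have a1: "\<bar>y\<bar>^3 \<le> (1 + y^2)^3" by (rule power_mono[OF absy_le]) simp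
  have a2: "\<bar>y\<bar> \<le> (1 + y^2)^3" using absy_le[of y] P3_ge[of y] by linarith
  have "\<bar>2 * y^3 - 6 * y\<bar> \<le> 2 * \<bar>y\<bar>^3 + 6 * \<bar>y\<bar>" by (simp add: abs_mult power_abs[symmetric] abs_triangle_ineq4 order_trans[OF abs_triangle_ineq4])
  also have "\<dots> \<le> 8 * (1 + y^2)^3" using a1 a2 by linarith
  finally show ?thesis using P by (simp add: abs_div divide_le_eq)
qed

lemma r2_bound: "\<bar>(6 * y^2 - 2) / (1 + y^2)^3\<bar> \<le> (6::real)"
proof -
  have P: "(1 + y^2)^3 > 0" using onep_pos[of y] by simp
  have "\<bar>6 * y^2 - 2\<bar> \<le> 6 * (1 + y^2)" by (simp add: abs_le_iff)
  also have "\<dots> \<le> 6 * (1 + y^2)^3" using P3_ge[of y] by (intro mult_left_mono) auto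
  finally show ?thesis using P by (simp add: abs_div divide_le_eq)
qed

lemma g_second_diff: "\<bar>x / (1 + x^2) - 2 * ((x + h) / (1 + (x + h)^2)) + (x + 2 * h) / (1 + (x + 2 * h)^2)\<bar> \<le> 8 * h^2"
  if "0 < h" for x h :: real
  using second_diff[of "\<lambda>y. y / (1 + y^2)" "\<lambda>y. (1 - y^2) / (1 + y^2)^2" "\<lambda>y. (2 * y^3 - 6 * y) / (1 + y^2)^3" 8 h x]
    g_deriv1 g_deriv2 g2_bound that by simp

lemma r_second_diff: "\<bar>1 / (1 + x^2) - 2 * (1 / (1 + (x + h)^2)) + 1 / (1 + (x + 2 * h)^2)\<bar> \<le> 6 * h^2"
  if "0 < h" for x h :: real
  using second_diff[of "\<lambda>y. 1 / (1 + y^2)" "\<lambda>y. - 2 * y / (1 + y^2)^2" "\<lambda>y. (6 * y^2 - 2) / (1 + y^2)^3" 6 h x]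
    r_deriv1 r_deriv2 r2_bound that by simp

definition fcc :: "nat \<Rightarrow> real \<Rightarrow> real" where
  "fcc m d = 1/2 - d * real m / ((real m)^2 + d^2)"

lemma fcc_g: "1 \<le> m \<Longrightarrow> fcc m d = 1/2 - (d / real m) / (1 + (d / real m)^2)"
  unfolding fcc_def by (simp add: field_simps power2_eq_square)

lemma fcc_d2: assumes "1 \<le> m"
  shows "\<bar>fcc m d - 2 * fcc m (d + 1) + fcc m (d + 2)\<bar> \<le> 8 / (real m)^2"
proof -
  define x where "x = d / real m"
  define h where "h = 1 / real m"
  have M: "real m > 0" using assms by simp
  have h0: "0 < h" unfolding h_def using M by simp
  have e1: "(d + 1) / real m = x + h" unfolding x_def h_def by (simp add: add_divide_distrib)
  have e2: "(d + 2) / real m = x + 2 * h" unfolding x_def h_def by (simp add: add_divide_distrib)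
  have "fcc m d - 2 * fcc m (d + 1) + fcc m (d + 2) =
     - (x / (1 + x^2) - 2 * ((x + h) / (1 + (x + h)^2)) + (x + 2 * h) / (1 + (x + 2 * h)^2))"
    unfolding fcc_g[OF assms] e1 e2 x_def[symmetric] by simp
  then have "\<bar>fcc m d - 2 * fcc m (d + 1) + fcc m (d + 2)\<bar> \<le> 8 * h^2"
    using g_second_diff[OF h0, of x] by simp
  then show ?thesis unfolding h_def by (simp add: power2_eq_square)
qed

lemma small_frac: assumes "0 \<le> a" "a \<le> 1" "real m > 0"
  shows "a / (2 * ((real m)^2 + d^2)) \<le> 1 / (real m)^2"
proof -
  have D: "(real m)^2 \<le> 2 * ((real m)^2 + d^2)" by (simp add: add_increasing)
  have "a / (2 * ((real m)^2 + d^2)) \<le> 1 / (2 * ((real m)^2 + d^2))"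
    using assms by (intro divide_right_mono) (auto intro: add_nonneg_nonneg)
  also have "\<dots> \<le> 1 / (real m)^2"
  proof (rule divide_left_mono)
    have "0 < 2 * ((real m)^2 + d^2)" using assms by (simp add: add_pos_nonneg)
    then show "0 < 2 * ((real m)^2 + d^2) * (real m)^2" using assms by simp
  qed (use D in auto)
  finally show ?thesis .
qed

lemma cc_err:
  assumes m1: "1 \<le> m" and lo: "real n - real m - 1 \<le> real k" and hi: "real k \<le> real n + real m + 1"
  shows "\<bar>ccf n m k - fcc m (real k - real n)\<bar> \<le> 1 / (real m)^2"
proof -
  define d where "d = real k - real n"
  have M: "real m > 0" using m1 by simp
  have D0: "(real m)^2 + d^2 > 0" using M by (simp add: add_pos_nonneg)
  consider (a) "real k \<le> real n - real m" | (b) "real n + real m \<le> real k"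
    | (c) "\<not> real k \<le> real n - real m" "\<not> real n + real m \<le> real k" by blast
  then show ?thesis
  proof cases
    case a
    then have c1: "ccf n m k = 1" by (simp add: ccf_def)
    have "1 - fcc m d = (real m + d)^2 / (2 * ((real m)^2 + d^2))"
    proof -
      define D where "D = (real m)^2 + d^2"
      have f: "fcc m d = 1/2 - d * real m / D" by (simp add: fcc_def D_def)
      have DD: "D > 0" using D0 D_def by simp
      have "1 - fcc m d = (D + 2 * d * real m) / (2 * D)" unfolding f using DD by (simp add: field_simps)
      also have "D + 2 * d * real m = (real m + d)^2" unfolding D_def by (simp add: power2_eq_square algebra_simps)
      finally show ?thesis unfolding D_def .
    qed
    moreover have "(real m + d)^2 \<le> 1"
    proof -
      have "-1 \<le> real m + d" "real m + d \<le> 0" using a lo unfolding d_def by auto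
      then have "\<bar>real m + d\<bar> \<le> 1" by auto
      then have "\<bar>real m + d\<bar>^2 \<le> 1^2" by (intro power_mono) auto
      then show ?thesis by simp
    qed
    ultimately have "\<bar>1 - fcc m d\<bar> \<le> 1 / (real m)^2"
      using small_frac[OF _ _ M] by simp
    then show ?thesis using c1 d_def by simp
  next
    case b
    then have c1: "ccf n m k = 0" using M by (simp add: ccf_def)
    have "fcc m d = (real m - d)^2 / (2 * ((real m)^2 + d^2))"
    proof -
      define D where "D = (real m)^2 + d^2"
      have f: "fcc m d = 1/2 - d * real m / D" by (simp add: fcc_def D_def)
      have DD: "D > 0" using D0 D_def by simp
      have "fcc m d = (D - 2 * d * real m) / (2 * D)" unfolding f using DD by (simp add: field_simps)
      also have "D - 2 * d * real m = (real m - d)^2" unfolding D_def by (simp add: power2_eq_square algebra_simps)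
      finally show ?thesis unfolding D_def .
    qed
    moreover have "(real m - d)^2 \<le> 1"
    proof -
      have "-1 \<le> real m - d" "real m - d \<le> 0" using b hi unfolding d_def by auto
      then have "\<bar>real m - d\<bar> \<le> 1" by auto
      then have "\<bar>real m - d\<bar>^2 \<le> 1^2" by (intro power_mono) auto
      then show ?thesis by simp
    qed
    ultimately have "\<bar>fcc m d\<bar> \<le> 1 / (real m)^2"
      using small_frac[OF _ _ M] by simp
    then show ?thesis using c1 d_def by simp
  next
    case c
    then have "ccf n m k = fcc m d" unfolding ccf_def fcc_def d_def by simp
    then show ?thesis using d_def M by simp
  qed
qed

lemma cc_d2_zero:
  assumes m1: "1 \<le> m" and mn: "m < n" and k: "k \<notin> {n - m - 1 .. n + m - 1}"
  shows "d2 (ccf n m) k = 0"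
proof -
  have M: "real m > 0" using m1 by simp
  from k consider "k < n - m - 1" | "n + m - 1 < k" by auto
  then show ?thesis
  proof cases
    case 1
    then have "Suc (Suc k) \<le> n - m" by simp
    then have a: "real (Suc (Suc k)) \<le> real (n - m)" by (simp only: of_nat_le_iff)
    have b: "real (n - m) = real n - real m" using mn by (simp add: of_nat_diff)
    have "real k + 2 \<le> real n - real m" using a b by simp
    then show ?thesis unfolding d2_def ccf_def by auto
  next
    case 2
    then have "n + m \<le> k" using m1 by simp
    then have "real (n + m) \<le> real k" by (simp only: of_nat_le_iff)
    then have "real n + real m \<le> real k" by simp
    then show ?thesis unfolding d2_def ccf_def using M by auto
  qed
qed

lemma lin4: "(a::real) \<le> 8 * e \<Longrightarrow> b \<le> e \<Longrightarrow> c \<le> e \<Longrightarrow> d \<le> e \<Longrightarrow> a + b + 2 * c + d \<le> 12 * e"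
  by linarith

lemma cc_d2_bound:
  assumes m1: "1 \<le> m"
  shows "\<bar>d2 (ccf n m) k\<bar> \<le> 12 / (real m)^2"
proof -
  have M: "real m > 0" using m1 by simp
  consider (a) "real k + 2 \<le> real n - real m" | (b) "real n + real m \<le> real k"
    | (c) "\<not> real k + 2 \<le> real n - real m" "\<not> real n + real m \<le> real k" by blast
  then show ?thesis
  proof cases
    case a then show ?thesis unfolding d2_def ccf_def by auto
  next
    case b then show ?thesis unfolding d2_def ccf_def using M by auto
  next
    case c
    have "n < k + 2 + m"
    proof -
      have "real n < real (k + 2 + m)" using c(1) by simp
      then show ?thesis by (simp only: of_nat_less_iff)
    qed
    then have "n \<le> k + m + 1" by simp
    then have "real n \<le> real (k + m + 1)" by (simp only: of_nat_le_iff)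
    then have lo: "real n - real m - 1 \<le> real k" by simp
    have "k < n + m"
    proof -
      have "real k < real (n + m)" using c(2) by simp
      then show ?thesis by (simp only: of_nat_less_iff)
    qed
    then have hi: "real k + 2 \<le> real n + real m + 1" by linarith
    define d where "d = real k - real n"
    have E0: "\<bar>ccf n m k - fcc m d\<bar> \<le> 1 / (real m)^2"
      unfolding d_def by (rule cc_err[OF m1]) (use lo hi in auto)
    have E1: "\<bar>ccf n m (Suc k) - fcc m (d + 1)\<bar> \<le> 1 / (real m)^2"
      using cc_err[OF m1, of n "Suc k"] lo hi unfolding d_def by (simp add: algebra_simps)
    have E2: "\<bar>ccf n m (Suc (Suc k)) - fcc m (d + 2)\<bar> \<le> 1 / (real m)^2"
      using cc_err[OF m1, of n "Suc (Suc k)"] lo hi unfolding d_def by (simp add: algebra_simps)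
    have F: "\<bar>fcc m d - 2 * fcc m (d + 1) + fcc m (d + 2)\<bar> \<le> 8 / (real m)^2" by (rule fcc_d2[OF m1])
    have "\<bar>d2 (ccf n m) k\<bar> \<le> \<bar>fcc m d - 2 * fcc m (d + 1) + fcc m (d + 2)\<bar>
        + \<bar>ccf n m k - fcc m d\<bar> + 2 * \<bar>ccf n m (Suc k) - fcc m (d + 1)\<bar> + \<bar>ccf n m (Suc (Suc k)) - fcc m (d + 2)\<bar>"
      unfolding d2_def
      using abs_ge_self[of "fcc m d - 2 * fcc m (d + 1) + fcc m (d + 2)"] abs_ge_minus_self[of "fcc m d - 2 * fcc m (d + 1) + fcc m (d + 2)"]
        abs_ge_self[of "ccf n m k - fcc m d"] abs_ge_minus_self[of "ccf n m k - fcc m d"]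
        abs_ge_self[of "ccf n m (Suc k) - fcc m (d + 1)"] abs_ge_minus_self[of "ccf n m (Suc k) - fcc m (d + 1)"]
        abs_ge_self[of "ccf n m (Suc (Suc k)) - fcc m (d + 2)"] abs_ge_minus_self[of "ccf n m (Suc (Suc k)) - fcc m (d + 2)"]
      unfolding abs_le_iff by (intro conjI; linarith)
    also have "\<dots> \<le> 12 * (1 / (real m)^2)"
    proof -
      have F': "\<bar>fcc m d - 2 * fcc m (d + 1) + fcc m (d + 2)\<bar> \<le> 8 * (1 / (real m)^2)" using F by simp
      show ?thesis by (rule lin4[OF F' E0 E1 E2])
    qed
    also have "\<dots> = 12 / (real m)^2" by simp
    finally show ?thesis .
  qed
qed

lemma cc_sum_bound:
  assumes m1: "1 \<le> m" and mn: "m < n"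
  shows "(\<Sum>k\<le>n + m. real (Suc k) * \<bar>d2 (ccf n m) k\<bar>) \<le> real (2 * m + 1) * (real (n + m + 1) * (12 / (real m)^2))"
proof -
  define I where "I = {n - m - 1 .. n + m - 1}"
  define C where "C = real (n + m + 1) * (12 / (real m)^2)"
  have C0: "C \<ge> 0" unfolding C_def by simp
  have "(\<Sum>k\<le>n + m. real (Suc k) * \<bar>d2 (ccf n m) k\<bar>) \<le> (\<Sum>k\<le>n + m. (if k \<in> I then C else 0))"
  proof (rule sum_mono)
    fix k assume k: "k \<in> {..n + m}"
    show "real (Suc k) * \<bar>d2 (ccf n m) k\<bar> \<le> (if k \<in> I then C else 0)"
    proof (cases "k \<in> I")
      case True
      have "real (Suc k) \<le> real (n + m + 1)" using k by simp
      then have "real (Suc k) * \<bar>d2 (ccf n m) k\<bar> \<le> real (n + m + 1) * (12 / (real m)^2)"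
        using cc_d2_bound[OF m1, of n k] by (intro mult_mono) auto
      then show ?thesis using True C_def by simp
    next
      case False
      have "d2 (ccf n m) k = 0" using False cc_d2_zero[OF m1 mn, of k] unfolding I_def by blast
      then show ?thesis using False by simp
    qed
  qed
  also have "\<dots> = (\<Sum>k\<in>{..n + m} \<inter> I. C)" by (rule sum.inter_restrict[symmetric]) simp
  also have "\<dots> = real (card ({..n + m} \<inter> I)) * C" by simp
  also have "\<dots> \<le> real (card I) * C"
    using C0 by (intro mult_right_mono) (auto intro!: card_mono simp: I_def)
  also have "card I = 2 * m + 1" unfolding I_def using m1 mn by simp
  finally show ?thesis unfolding C_def .
qed

definition rcc :: "nat \<Rightarrow> real \<Rightarrow> real" where
  "rcc m x = ((real m)^2 - x^2) / (2 * ((real m)^2 + x^2))"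

lemma rcc_r: "1 \<le> m \<Longrightarrow> rcc m x = 1 / (1 + (x / real m)^2) - 1/2"
  unfolding rcc_def by (simp add: field_simps power2_eq_square)

lemma rcc_d2: assumes "1 \<le> m"
  shows "\<bar>rcc m x - 2 * rcc m (x + 1) + rcc m (x + 2)\<bar> \<le> 6 / (real m)^2"
proof -
  define y where "y = x / real m"
  define h where "h = 1 / real m"
  have M: "real m > 0" using assms by simp
  have h0: "0 < h" unfolding h_def using M by simp
  have e1: "(x + 1) / real m = y + h" unfolding y_def h_def by (simp add: add_divide_distrib)
  have e2: "(x + 2) / real m = y + 2 * h" unfolding y_def h_def by (simp add: add_divide_distrib)
  have "rcc m x - 2 * rcc m (x + 1) + rcc m (x + 2) =
     1 / (1 + y^2) - 2 * (1 / (1 + (y + h)^2)) + 1 / (1 + (y + 2 * h)^2)"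
    unfolding rcc_r[OF assms] e1 e2 y_def[symmetric] by simp
  then have "\<bar>rcc m x - 2 * rcc m (x + 1) + rcc m (x + 2)\<bar> \<le> 6 * h^2"
    using r_second_diff[OF h0, of y] by simp
  then show ?thesis unfolding h_def by (simp add: power2_eq_square)
qed

lemma dd_formula: "j \<le> m \<Longrightarrow> ddf m j = rcc m (real j)"
  unfolding ddf_def rcc_def by auto

lemma dd_term:
  assumes m1: "1 \<le> m"
  shows "real (Suc j) * \<bar>d2 (ddf m) j\<bar> \<le> 6 / real m + (if j = m - 1 then 1 else 0)"
proof -
  have M: "real m > 0" using m1 by simp
  consider (a) "Suc (Suc j) \<le> m" | (b) "j = m - 1" | (c) "m \<le> j" using m1 by linarith
  then show ?thesis
  proof cases
    case a
    then have jm: "j \<noteq> m - 1" by simp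
    have "d2 (ddf m) j = rcc m (real j) - 2 * rcc m (real j + 1) + rcc m (real j + 2)"
      unfolding d2_def using a by (simp add: dd_formula add.commute)
    then have B: "\<bar>d2 (ddf m) j\<bar> \<le> 6 / (real m)^2" using rcc_d2[OF m1, of "real j"] by simp
    have S: "real (Suc j) \<le> real m" using a by simp
    have "real (Suc j) * \<bar>d2 (ddf m) j\<bar> \<le> real m * (6 / (real m)^2)"
      using B S by (intro mult_mono) auto
    also have "\<dots> = 6 / real m" by (simp add: power2_eq_square)
    finally show ?thesis using jm by simp
  next
    case b
    have "d2 (ddf m) j = ddf m (m - 1)" unfolding d2_def b using m1 by (simp add: ddf_def)
    also have "\<dots> = rcc m (real m - 1)" using m1 by (simp add: dd_formula of_nat_diff)
    finally have dj: "d2 (ddf m) j = rcc m (real m - 1)" .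
    define D where "D = 2 * ((real m)^2 + (real m - 1)^2)"
    have D0: "D > 0" unfolding D_def using M by (simp add: add_pos_nonneg)
    have r: "rcc m (real m - 1) = (2 * real m - 1) / D" unfolding rcc_def D_def
      by (simp add: power2_eq_square algebra_simps)
    have nn: "0 \<le> 2 * real m - 1" using m1 by simp
    have Sj: "real (Suc j) = real m" using b m1 by simp
    have "real m * (2 * real m - 1) \<le> D"
    proof -
      have "0 \<le> 2 * (real m - 3/4)^2 + 7/8" by simp
      then show ?thesis unfolding D_def by (simp add: power2_eq_square algebra_simps)
    qed
    then have "real m * ((2 * real m - 1) / D) \<le> 1" using D0 by (simp add: field_simps)
    then have "real (Suc j) * \<bar>d2 (ddf m) j\<bar> \<le> 1" unfolding Sj dj r using nn D0 by simp
    moreover have "0 \<le> 6 / real m" using M by simp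
    ultimately have "real (Suc j) * \<bar>d2 (ddf m) j\<bar> \<le> 6 / real m + 1" by linarith
    then show ?thesis using b by simp
  next
    case c
    have "d2 (ddf m) j = 0" unfolding d2_def ddf_def using c by simp
    moreover have "0 \<le> 6 / real m" using M by simp
    ultimately show ?thesis by simp
  qed
qed

lemma dd_sum_bound:
  assumes m1: "1 \<le> m"
  shows "(\<Sum>j\<le>m. real (Suc j) * \<bar>d2 (ddf m) j\<bar>) \<le> 13"
proof -
  have M: "real m > 0" using m1 by simp
  have "(\<Sum>j\<le>m. real (Suc j) * \<bar>d2 (ddf m) j\<bar>) \<le> (\<Sum>j\<le>m. 6 / real m + (if j = m - 1 then 1 else 0))"
    by (rule sum_mono) (rule dd_term[OF m1])
  also have "\<dots> = real (Suc m) * (6 / real m) + 1"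
    using m1 by (simp add: sum.distrib)
  also have "real (Suc m) * (6 / real m) \<le> 12"
  proof -
    have "real (Suc m) \<le> 2 * real m" using m1 by simp
    then have "real (Suc m) * (6 / real m) \<le> 2 * real m * (6 / real m)"
      using M by (intro mult_right_mono) auto
    also have "\<dots> = 12" using M by simp
    finally show ?thesis .
  qed
  finally show ?thesis by simp
qed

lemma Tc_abs_bound:
  assumes "c (Suc N) = 0" "c (Suc (Suc N)) = 0"
  shows "\<bar>Tc c N (s + b)\<bar> \<le> (\<Sum>k\<le>N. \<bar>d2 c k\<bar> * Sk k (s + b))"
  using abel_bound[OF assms] .

lemma pointwise_bound:
  assumes m1: "1 \<le> m" and mn: "m < n"
    and t: "0 \<le> t" "t \<le> pi" and s: "0 \<le> s" "s \<le> pi"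
  shows "\<bar>vp_kernel n m (cos t) (- cos s)\<bar> \<le> (1 / pi) *
     ((\<Sum>k\<le>n + m. \<bar>d2 (ccf n m) k\<bar> * (Sk k (s + (t - pi)) + Sk k (s + (- t - pi))))
      + 2 * (\<Sum>j\<le>m. \<bar>d2 (ddf m) j\<bar> * (Sk j (s + (t - pi)) + Sk j (s + (- t - pi)))))"
proof -
  define sg where "sg = pi - s"
  have sg: "0 \<le> sg" "sg \<le> pi" using s by (auto simp: sg_def)
  have cs: "cos sg = - cos s" by (simp add: sg_def cos_diff)
  have u: "t - sg = s + (t - pi)" by (simp add: sg_def)
  have v: "t + sg = - (s + (- t - pi))" by (simp add: sg_def)
  define c where "c = ccf n m"
  define d where "d = ddf m"
  have c0: "c (Suc (n + m)) = 0" "c (Suc (Suc (n + m))) = 0" by (simp_all add: c_def ccf_def)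
  have d0: "d (Suc m) = 0" "d (Suc (Suc m)) = 0" by (simp_all add: d_def ddf_def)
  have TcE: "\<And>w. Tc c (n + m) (- w) = Tc c (n + m) w" by (simp add: Tc_def ee_even)
  have TdE: "\<And>w. Tc d m (- w) = Tc d m w" by (simp add: Tc_def ee_even)
  have KI: "pi * vp_kernel n m (cos t) (cos sg) =
     Tc c (n + m) (t - sg) + Tc c (n + m) (t + sg)
     - 2 * cos (real n * (t - sg)) * Tc d m (t + sg)
     - 2 * cos (real n * (t + sg)) * Tc d m (t - sg)"
    unfolding c_def d_def by (rule kernel_identity[OF m1 mn t sg])
  define b1 where "b1 = t - pi"
  define b2 where "b2 = - t - pi"
  have KI2: "pi * vp_kernel n m (cos t) (- cos s) =
     Tc c (n + m) (s + b1) + Tc c (n + m) (s + b2)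
     - 2 * cos (real n * (t - sg)) * Tc d m (s + b2)
     - 2 * cos (real n * (t + sg)) * Tc d m (s + b1)"
    using KI unfolding cs u v b1_def[symmetric] b2_def[symmetric] TcE TdE .
  have cb: "\<And>z::real. \<bar>cos z\<bar> \<le> 1" by (rule abs_cos_le_one)
  have A1: "\<bar>Tc c (n + m) (s + b1)\<bar> \<le> (\<Sum>k\<le>n + m. \<bar>d2 c k\<bar> * Sk k (s + b1))" by (rule Tc_abs_bound[OF c0])
  have A2: "\<bar>Tc c (n + m) (s + b2)\<bar> \<le> (\<Sum>k\<le>n + m. \<bar>d2 c k\<bar> * Sk k (s + b2))" by (rule Tc_abs_bound[OF c0])
  have B1: "\<bar>Tc d m (s + b1)\<bar> \<le> (\<Sum>j\<le>m. \<bar>d2 d j\<bar> * Sk j (s + b1))" by (rule Tc_abs_bound[OF d0])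
  have B2: "\<bar>Tc d m (s + b2)\<bar> \<le> (\<Sum>j\<le>m. \<bar>d2 d j\<bar> * Sk j (s + b2))" by (rule Tc_abs_bound[OF d0])
  have C1: "\<bar>2 * cos (real n * (t - sg)) * Tc d m (s + b2)\<bar> \<le> 2 * \<bar>Tc d m (s + b2)\<bar>"
    using mult_right_mono[OF cb[of "real n * (t - sg)"] abs_ge_zero[of "Tc d m (s + b2)"]] by (simp add: abs_mult)
  have C2: "\<bar>2 * cos (real n * (t + sg)) * Tc d m (s + b1)\<bar> \<le> 2 * \<bar>Tc d m (s + b1)\<bar>"
    using mult_right_mono[OF cb[of "real n * (t + sg)"] abs_ge_zero[of "Tc d m (s + b1)"]] by (simp add: abs_mult)
  have "pi * \<bar>vp_kernel n m (cos t) (- cos s)\<bar> = \<bar>pi * vp_kernel n m (cos t) (- cos s)\<bar>"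
    by (simp add: abs_mult)
  also have "\<dots> \<le> \<bar>Tc c (n + m) (s + b1)\<bar> + \<bar>Tc c (n + m) (s + b2)\<bar>
     + \<bar>2 * cos (real n * (t - sg)) * Tc d m (s + b2)\<bar> + \<bar>2 * cos (real n * (t + sg)) * Tc d m (s + b1)\<bar>"
    unfolding KI2 by (rule order_trans[OF abs_triangle_ineq4] add_mono abs_triangle_ineq abs_triangle_ineq4 order_refl
       order_trans[OF abs_triangle_ineq] | simp)+
  also have "\<dots> \<le> (\<Sum>k\<le>n + m. \<bar>d2 c k\<bar> * Sk k (s + b1)) + (\<Sum>k\<le>n + m. \<bar>d2 c k\<bar> * Sk k (s + b2))
      + 2 * (\<Sum>j\<le>m. \<bar>d2 d j\<bar> * Sk j (s + b2)) + 2 * (\<Sum>j\<le>m. \<bar>d2 d j\<bar> * Sk j (s + b1))"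
    using A1 A2 B1 B2 C1 C2 by linarith
  also have "\<dots> = (\<Sum>k\<le>n + m. \<bar>d2 c k\<bar> * (Sk k (s + b1) + Sk k (s + b2)))
      + 2 * (\<Sum>j\<le>m. \<bar>d2 d j\<bar> * (Sk j (s + b1) + Sk j (s + b2)))"
    by (simp add: distrib_left sum.distrib)
  finally have "pi * \<bar>vp_kernel n m (cos t) (- cos s)\<bar> \<le> \<dots>" .
  then show ?thesis unfolding c_def d_def b1_def b2_def by (simp add: field_simps)
qed

lemma wsum_int:
  assumes w: "\<And>k. 0 \<le> w k"
  shows "\<exists>I. ((\<lambda>s. \<Sum>k\<le>N. w k * (Sk k (s + bp) + Sk k (s + bq))) has_integral I) {0..pi}
      \<and> I \<le> (\<Sum>k\<le>N. w k * (2 * (real (Suc k) * pi)))"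
proof -
  define J where "J k b = integral {0..pi} (\<lambda>s. Sk k (s + b))" for k b
  have hJ: "\<And>k b. ((\<lambda>s. Sk k (s + b)) has_integral J k b) {0..pi}"
    unfolding J_def using Sk_integral_pi by (blast intro: integrable_integral)
  have hJle: "\<And>k b. J k b \<le> real (Suc k) * pi" unfolding J_def using Sk_integral_pi by blast
  have "((\<lambda>s. \<Sum>k\<le>N. w k * (Sk k (s + bp) + Sk k (s + bq))) has_integral (\<Sum>k\<le>N. w k * (J k bp + J k bq))) {0..pi}"
    by (intro has_integral_sum finite_atMost has_integral_mult_right has_integral_add hJ)
  moreover have "(\<Sum>k\<le>N. w k * (J k bp + J k bq)) \<le> (\<Sum>k\<le>N. w k * (2 * (real (Suc k) * pi)))"
  proof (rule sum_mono)
    fix k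
    have "J k bp + J k bq \<le> 2 * (real (Suc k) * pi)" using hJle[of k bp] hJle[of k bq] by linarith
    then show "w k * (J k bp + J k bq) \<le> w k * (2 * (real (Suc k) * pi))"
      using w[of k] by (rule mult_left_mono)
  qed
  ultimately show ?thesis by blast
qed

lemma cont_cheb_p: "continuous_on {-1..1} (cheb_p r)"
proof (cases "r = 0")
  case True then show ?thesis by (simp add: cheb_p_def continuous_on_const)
next
  case False
  have "continuous_on {-1..1} (\<lambda>x. sqrt (2 / pi) * cos (real r * arccos x))"
    by (intro continuous_intros) auto
  then show ?thesis using False by (simp add: cheb_p_def)
qed

lemma cont_vp_q: "continuous_on {-1..1} (vp_q n m r)"
proof (cases "real r \<le> real n - real m")
  case True then show ?thesis by (simp add: vp_q_def cont_cheb_p)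
next
  case False
  have "continuous_on {-1..1} (\<lambda>x. vp_mu n m r * cheb_p r x - vp_mu n m (2 * n - r) * cheb_p (2 * n - r) x)"
    by (intro continuous_intros cont_cheb_p[THEN continuous_on_compose2[where g="cheb_p _" and f="\<lambda>x. x"]]) auto
  then show ?thesis using False by (simp add: vp_q_def)
qed

lemma cont_kernel: "continuous_on {-1..1} (vp_kernel n m x)"
proof -
  have phi: "\<And>k. continuous_on {-1..1} (vp_phi n m k)"
    unfolding vp_phi_def by (intro continuous_on_sum continuous_on_mult_left cont_vp_q)
  show ?thesis unfolding vp_kernel_def by (intro continuous_on_sum continuous_on_mult_left phi)
qed

lemma cheb_w_meas: "cheb_w \<in> borel_measurable borel"
  unfolding cheb_w_def by measurable

lemma set_meas_f: "set_borel_measurable borel {-1..1} (\<lambda>y. \<bar>vp_kernel n m x y\<bar> * cheb_w y)"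
proof -
  have a: "(\<lambda>y. indicator {-1..1::real} y *\<^sub>R \<bar>vp_kernel n m x y\<bar>) \<in> borel_measurable borel"
    by (rule borel_measurable_continuous_on_indicator) (auto intro: continuous_on_rabs cont_kernel)
  have "(\<lambda>y. (indicator {-1..1::real} y *\<^sub>R \<bar>vp_kernel n m x y\<bar>) * cheb_w y) \<in> borel_measurable borel"
    using a cheb_w_meas by (rule borel_measurable_times)
  then show ?thesis unfolding set_borel_measurable_def by (simp add: mult.assoc)
qed

lemma w_sin: assumes "0 \<le> s" "s \<le> pi"
  shows "0 \<le> cheb_w (- cos s) * sin s \<and> cheb_w (- cos s) * sin s \<le> 1"
proof -
  have s0: "0 \<le> sin s" using assms by (simp add: sin_ge_zero)
  have "1 - (- cos s)^2 = (sin s)^2" by (simp add: sin_squared_eq)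
  then have "cheb_w (- cos s) = 1 / sin s" unfolding cheb_w_def using s0 by simp
  then show ?thesis using s0 by (cases "sin s = 0") auto
qed

lemma Lambda_x_bound:
  assumes m1: "1 \<le> m" and mn: "m < n" and x: "x \<in> {-1..1}"
  shows "(\<integral>\<^sup>+ y. ennreal (\<bar>vp_kernel n m x y\<bar> * cheb_w y) * indicator {-1..1} y \<partial>lborel)
    \<le> ennreal (2 * (\<Sum>k\<le>n + m. real (Suc k) * \<bar>d2 (ccf n m) k\<bar>) + 4 * (\<Sum>j\<le>m. real (Suc j) * \<bar>d2 (ddf m) j\<bar>))"
proof -
  define t where "t = arccos x"
  have t: "0 \<le> t" "t \<le> pi" unfolding t_def using x by (auto intro: arccos_lbound arccos_ubound)
  have xt: "cos t = x" unfolding t_def using x by (simp add: cos_arccos)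
  define f where "f y = \<bar>vp_kernel n m x y\<bar> * cheb_w y" for y
  define wc where "wc k = \<bar>d2 (ccf n m) k\<bar>" for k
  define wd where "wd j = \<bar>d2 (ddf m) j\<bar>" for j
  define b1 where "b1 = t - pi"
  define b2 where "b2 = - t - pi"
  define F1 where "F1 s = (\<Sum>k\<le>n + m. wc k * (Sk k (s + b1) + Sk k (s + b2)))" for s
  define F2 where "F2 s = (\<Sum>j\<le>m. wd j * (Sk j (s + b1) + Sk j (s + b2)))" for s
  define Bnd where "Bnd s = (1 / pi) * (F1 s + 2 * F2 s)" for s
  obtain I1 where I1: "(F1 has_integral I1) {0..pi}" "I1 \<le> (\<Sum>k\<le>n + m. wc k * (2 * (real (Suc k) * pi)))"
    using wsum_int[where w=wc and N="n + m" and bp=b1 and bq=b2] unfolding F1_def wc_def by fastforce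
  obtain I2 where I2: "(F2 has_integral I2) {0..pi}" "I2 \<le> (\<Sum>j\<le>m. wd j * (2 * (real (Suc j) * pi)))"
    using wsum_int[where w=wd and N=m and bp=b1 and bq=b2] unfolding F2_def wd_def by fastforce
  have IB: "(Bnd has_integral ((1 / pi) * (I1 + 2 * I2))) {0..pi}"
    unfolding Bnd_def by (intro has_integral_mult_right has_integral_add I1(1) I2(1))
  have Bnn: "\<And>s. 0 \<le> Bnd s"
    unfolding Bnd_def F1_def F2_def wc_def wd_def
    by (intro mult_nonneg_nonneg add_nonneg_nonneg sum_nonneg) (auto intro: S_nonneg)
  define Ac where "Ac = (\<Sum>k\<le>n + m. real (Suc k) * \<bar>d2 (ccf n m) k\<bar>)"
  define Ad where "Ad = (\<Sum>j\<le>m. real (Suc j) * \<bar>d2 (ddf m) j\<bar>)"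
  have e1: "(\<Sum>k\<le>n + m. wc k * (2 * (real (Suc k) * pi))) = 2 * pi * Ac"
    unfolding Ac_def wc_def by (simp add: sum_distrib_left algebra_simps)
  have e2: "(\<Sum>j\<le>m. wd j * (2 * (real (Suc j) * pi))) = 2 * pi * Ad"
    unfolding Ad_def wd_def by (simp add: sum_distrib_left algebra_simps)
  have Ival: "(1 / pi) * (I1 + 2 * I2) \<le> 2 * Ac + 4 * Ad"
  proof -
    have "I1 + 2 * I2 \<le> 2 * pi * Ac + 2 * (2 * pi * Ad)" using I1(2) I2(2) e1 e2 by linarith
    then have "(1 / pi) * (I1 + 2 * I2) \<le> (1 / pi) * (2 * pi * Ac + 2 * (2 * pi * Ad))"
      by (intro mult_left_mono) auto
    also have "\<dots> = 2 * Ac + 4 * Ad" by (simp add: field_simps)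
    finally show ?thesis .
  qed
  have meas: "set_borel_measurable borel {- cos 0..- cos pi} f"
    unfolding f_def using set_meas_f[of n m x] by simp
  have sub: "(\<integral>\<^sup>+ y. ennreal (f y * indicator {- cos 0..- cos pi} y) \<partial>lborel) =
      (\<integral>\<^sup>+ s. ennreal (f (- cos s) * sin s * indicator {0..pi} s) \<partial>lborel)"
    by (rule nn_integral_substitution[where g="\<lambda>s. - cos s" and g'=sin and a=0 and b=pi and f=f, OF meas])
       (auto intro!: derivative_eq_intros continuous_intros sin_ge_zero)
  have "(\<integral>\<^sup>+ y. ennreal (\<bar>vp_kernel n m x y\<bar> * cheb_w y) * indicator {-1..1} y \<partial>lborel)
      = (\<integral>\<^sup>+ y. ennreal (f y * indicator {- cos 0..- cos pi} y) \<partial>lborel)"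
    by (intro nn_integral_cong) (auto simp: f_def split: split_indicator)
  also have "\<dots> = (\<integral>\<^sup>+ s. ennreal (f (- cos s) * sin s * indicator {0..pi} s) \<partial>lborel)" by (rule sub)
  also have "\<dots> \<le> (\<integral>\<^sup>+ s. ennreal (indicator {0..pi} s * Bnd s) \<partial>lborel)"
  proof (rule nn_integral_mono)
    fix s :: real
    show "ennreal (f (- cos s) * sin s * indicator {0..pi} s) \<le> ennreal (indicator {0..pi} s * Bnd s)"
    proof (cases "s \<in> {0..pi}")
      case False then show ?thesis by simp
    next
      case True
      then have s: "0 \<le> s" "s \<le> pi" by auto
      have ws: "0 \<le> cheb_w (- cos s) * sin s" "cheb_w (- cos s) * sin s \<le> 1" using w_sin[OF s] by auto
      have "f (- cos s) * sin s = \<bar>vp_kernel n m x (- cos s)\<bar> * (cheb_w (- cos s) * sin s)"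
        unfolding f_def by (simp add: mult.assoc)
      also have "\<dots> \<le> \<bar>vp_kernel n m x (- cos s)\<bar> * 1"
        using ws by (intro mult_left_mono) auto
      also have "\<dots> \<le> Bnd s"
        using pointwise_bound[OF m1 mn t s] unfolding xt Bnd_def F1_def F2_def wc_def wd_def b1_def b2_def by simp
      finally show ?thesis using True by (intro ennreal_leI) simp
    qed
  qed
  also have "\<dots> = ennreal ((1 / pi) * (I1 + 2 * I2))"
    by (rule nn_integral_has_integral_lebesgue) (use Bnn IB in auto)
  also have "\<dots> \<le> ennreal (2 * Ac + 4 * Ad)" by (rule ennreal_leI[OF Ival])
  finally show ?thesis unfolding Ac_def Ad_def .
qed

lemma A_bound:
  fixes \<theta> :: real
  assumes th: "0 < \<theta>" and m1: "1 \<le> m" and mn: "m < n" and tn: "\<theta> * real n \<le> 2 * real m"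
  shows "real (2 * m + 1) * (real (n + m + 1) * (12 / (real m)^2)) \<le> 144 / \<theta>"
proof -
  have M: "real m > 0" using m1 by simp
  have a: "real (2 * m + 1) \<le> 3 * real m" using m1 by simp
  have b: "real (n + m + 1) \<le> 2 * real n" using mn by simp
  have "real (2 * m + 1) * (real (n + m + 1) * (12 / (real m)^2)) \<le> (3 * real m) * ((2 * real n) * (12 / (real m)^2))"
    using a b by (intro mult_mono) auto
  also have "\<dots> = 72 * real n / real m" using M by (simp add: field_simps power2_eq_square)
  also have "\<dots> \<le> 144 / \<theta>"
  proof -
    have "72 * real n * \<theta> \<le> 144 * real m" using tn by (simp add: algebra_simps)
    then show ?thesis using M th by (simp add: field_simps)
  qed
  finally show ?thesis .
qed

theorem theorem1:
  fixes \<theta> :: real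
  assumes "0 < \<theta>" and "\<theta> < 1"
  shows "(SUP n\<in>{n::nat. \<lfloor>\<theta> * real n\<rfloor> \<ge> 1}. vp_Lambda n (nat \<lfloor>\<theta> * real n\<rfloor>)) < \<infinity>"
proof -
  define C where "C = 2 * (144 / \<theta>) + 4 * 13"
  have bound: "vp_Lambda n (nat \<lfloor>\<theta> * real n\<rfloor>) \<le> ennreal C" if n: "\<lfloor>\<theta> * real n\<rfloor> \<ge> 1" for n
  proof -
    define m where "m = nat \<lfloor>\<theta> * real n\<rfloor>"
    have fm: "real m = of_int \<lfloor>\<theta> * real n\<rfloor>" unfolding m_def using n by simp
    have n': "(1::real) \<le> of_int \<lfloor>\<theta> * real n\<rfloor>" using n by (metis of_int_1 of_int_le_iff)
    have "1 \<le> real m" using fm n' by linarith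
    then have m1: "1 \<le> m" by simp
    have fl1: "of_int \<lfloor>\<theta> * real n\<rfloor> \<le> \<theta> * real n" by (rule of_int_floor_le)
    have fl2: "\<theta> * real n < of_int \<lfloor>\<theta> * real n\<rfloor> + 1" by (rule real_of_int_floor_add_one_gt)
    have n0: "0 < n" using n by (cases "n = 0") auto
    have "\<theta> * real n < real n" using assms n0 by simp
    then have "real m < real n" using fm fl1 by linarith
    then have mn: "m < n" by simp
    have tn: "\<theta> * real n \<le> 2 * real m" using fm fl2 m1 by linarith
    have Ac: "(\<Sum>k\<le>n + m. real (Suc k) * \<bar>d2 (ccf n m) k\<bar>) \<le> 144 / \<theta>"
      using cc_sum_bound[OF m1 mn] A_bound[OF assms(1) m1 mn tn] by linarith
    have Ad: "(\<Sum>j\<le>m. real (Suc j) * \<bar>d2 (ddf m) j\<bar>) \<le> 13" by (rule dd_sum_bound[OF m1])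
    have "vp_Lambda n m \<le> ennreal C"
      unfolding vp_Lambda_def
    proof (rule SUP_least)
      fix x :: real assume x: "x \<in> {-1..1}"
      have "(\<integral>\<^sup>+ y. ennreal (\<bar>vp_kernel n m x y\<bar> * cheb_w y) * indicator {-1..1} y \<partial>lborel)
        \<le> ennreal (2 * (\<Sum>k\<le>n + m. real (Suc k) * \<bar>d2 (ccf n m) k\<bar>) + 4 * (\<Sum>j\<le>m. real (Suc j) * \<bar>d2 (ddf m) j\<bar>))"
        by (rule Lambda_x_bound[OF m1 mn x])
      also have "\<dots> \<le> ennreal C" unfolding C_def using Ac Ad by (intro ennreal_leI) linarith
      finally show "(\<integral>\<^sup>+ y. ennreal (\<bar>vp_kernel n m x y\<bar> * cheb_w y) * indicator {-1..1} y \<partial>lborel) \<le> ennreal C" .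
    qed
    then show ?thesis unfolding m_def .
  qed
  have "(SUP n\<in>{n::nat. \<lfloor>\<theta> * real n\<rfloor> \<ge> 1}. vp_Lambda n (nat \<lfloor>\<theta> * real n\<rfloor>)) \<le> ennreal C"
    by (rule SUP_least) (use bound in auto)
  also have "ennreal C < \<infinity>" by simp
  finally show ?thesis .
qed

end
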